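(* Let $G$ be the cube graph $Q_3$, let $P$ be a pot realizing $G$ according to Scenario 3, and let $\lambda$ be an assembly design of $G$ with $P_\lambda(G)\subseteq P$. If $t\in P$ and $\lambda(v_i)=\lambda(v_j)=t$ for two distinct vertices $v_i\neq v_j$, then $t=\{a,b,c\}$ where the three cohesive-end types $a,b,c$ belong to three pairwise distinct bond-edge types.
   Context: Fix a set $\Sigma$ of symbols (bond-edge types) and a disjoint copy $\hat\Sigma=\{\hat a:a\in\Sigma\}$ with $\hat{\hat a}=a$; elements of $\Sigma\cup\hat\Sigma$ are cohesive-end types, and $x$ and $\hat x$ belong to the same bond-edge type. A tile is a finite multiset of cohesive-end types. A pot is a finite set $P$ of tiles such that whenever $x$ occurs in a tile of $P$, $\hat x$ occurs in some tile of $P$. Graphs are finite, loops and multiple edges allowed. An assembly design of a graph $H$ is a labeling $\lambda$ of the half-edges of $H$ by cohesive-end types such that the two half-edges of each edge receive complementary labels $x,\hat x$; $\lambda(v)=t_v$ denotes the multiset of labels of half-edges at vertex $v$, and $P_\lambda(H)=\{t_v: v\in V(H)\}$. $P$ realizes $H$ ($H\in\mathcal{O}(P)$) if some assembly design $\lambda$ has $P_\lambda(H)\subseteq P$. $P$ realizes $G$ according to Scenario 3 if $G\in\mathcal{O}(P)$, every $H\in\mathcal{O}(P)$ has $\#V(H)\ge\#V(G)$, and every $H\in\mathcal{O}(P)$ with $\#V(H)=\#V(G)$ is isomorphic to $G$. *)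

theory Defs
  imports Main "HOL-Library.Multiset"
begin

text \<open>A cohesive-end type over the symbol set (type 'a) is a pair (a, h):
  (a, False) stands for a, (a, True) for hat a. The bond-edge type is fst.\<close>

type_synonym 'a cend = "'a \<times> bool"
type_synonym 'a tile = "'a cend multiset"

definition hat :: "'a cend \<Rightarrow> 'a cend" where
  "hat x = (fst x, \<not> snd x)"

definition bond_type :: "'a cend \<Rightarrow> 'a" where
  "bond_type x = fst x"

definition is_pot :: "'a tile set \<Rightarrow> bool" where
  "is_pot P \<longleftrightarrow> finite P \<and>
     (\<forall>t\<in>P. \<forall>x. x \<in># t \<longrightarrow> (\<exists>s\<in>P. hat x \<in># s))"

text \<open>Edge e has two half-edges (e,False) and (e,True), attached to the
  vertices fst (ends e) and snd (ends e) respectively.\<close>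

record ('v, 'e) mgraph =
  verts :: "'v set"
  edges :: "'e set"
  ends :: "'e \<Rightarrow> 'v \<times> 'v"

definition half_end :: "('v, 'e) mgraph \<Rightarrow> 'e \<times> bool \<Rightarrow> 'v" where
  "half_end H h = (if snd h then snd (ends H (fst h)) else fst (ends H (fst h)))"

definition is_graph :: "('v, 'e) mgraph \<Rightarrow> bool" where
  "is_graph H \<longleftrightarrow> finite (verts H) \<and> finite (edges H) \<and> verts H \<noteq> {} \<and>
     (\<forall>e\<in>edges H. fst (ends H e) \<in> verts H \<and> snd (ends H e) \<in> verts H)"

definition half_edges_at :: "('v, 'e) mgraph \<Rightarrow> 'v \<Rightarrow> ('e \<times> bool) set" where
  "half_edges_at H v = {h. fst h \<in> edges H \<and> half_end H h = v}"

definition assembly_design :: "('v, 'e) mgraph \<Rightarrow> ('e \<times> bool \<Rightarrow> 'a cend) \<Rightarrow> bool" where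
  "assembly_design H lam \<longleftrightarrow> (\<forall>e\<in>edges H. lam (e, True) = hat (lam (e, False)))"

definition tile_at :: "('v, 'e) mgraph \<Rightarrow> ('e \<times> bool \<Rightarrow> 'a cend) \<Rightarrow> 'v \<Rightarrow> 'a tile" where
  "tile_at H lam v = image_mset lam (mset_set (half_edges_at H v))"

definition pot_of :: "('v, 'e) mgraph \<Rightarrow> ('e \<times> bool \<Rightarrow> 'a cend) \<Rightarrow> 'a tile set" where
  "pot_of H lam = tile_at H lam ` verts H"

definition realizes :: "'a tile set \<Rightarrow> ('v, 'e) mgraph \<Rightarrow> bool" where
  "realizes P H \<longleftrightarrow> (\<exists>lam. assembly_design H lam \<and> pot_of H lam \<subseteq> P)"

definition mgraph_iso :: "('v, 'e) mgraph \<Rightarrow> ('w, 'f) mgraph \<Rightarrow> bool" where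
  "mgraph_iso H K \<longleftrightarrow> (\<exists>f g. bij_betw f (verts H) (verts K) \<and> bij_betw g (edges H) (edges K) \<and>
     (\<forall>e\<in>edges H. ends K (g e) = (f (fst (ends H e)), f (snd (ends H e))) \<or>
                  ends K (g e) = (f (snd (ends H e)), f (fst (ends H e)))))"

text \<open>Scenario 3. Every finite graph is isomorphic to one on nat vertices and
  nat edge labels, so H ranges over such graphs.\<close>
definition realizes_scenario3 :: "'a tile set \<Rightarrow> ('v, 'e) mgraph \<Rightarrow> bool" where
  "realizes_scenario3 P G \<longleftrightarrow> realizes P G \<and>
     (\<forall>H :: (nat, nat) mgraph. is_graph H \<and> realizes P H \<longrightarrow>
         card (verts H) \<ge> card (verts G) \<and>
         (card (verts H) = card (verts G) \<longrightarrow> mgraph_iso H G))"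

text \<open>Vertices 0..7 (binary words of length 3); edge (v,i) for bit i of v
  equal to 0 joins v and v + 2^i.\<close>
definition Q3 :: "(nat, nat \<times> nat) mgraph" where
  "Q3 = \<lparr> verts = {0..<8},
          edges = {(v, i). v < 8 \<and> i < 3 \<and> \<not> bit v i},
          ends = (\<lambda>(v, i). (v, v + 2 ^ i)) \<rparr>"

end

theory Submission
  imports Defs "HOL-Library.Multiset"
begin


lemma lt8: "(v::nat) < 8 \<Longrightarrow> v=0 \<or> v=1 \<or> v=2 \<or> v=3 \<or> v=4 \<or> v=5 \<or> v=6 \<or> v=7" by auto
lemma lt3: "(v::nat) < 3 \<Longrightarrow> v=0 \<or> v=1 \<or> v=2" by auto

definition E12 :: "(nat \<times> nat) set" where
 "E12 = {(0,0),(2,0),(4,0),(6,0),(0,1),(1,1),(4,1),(5,1),(0,2),(1,2),(2,2),(3,2)}"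

lemma edges_Q3_1: "v < 8 \<Longrightarrow> i < 3 \<Longrightarrow> \<not> bit v i \<Longrightarrow> (v,i) \<in> E12"
  apply (drule lt8, drule lt3)
  apply (elim disjE)
  apply (simp_all add: E12_def bit_iff_odd)
  done

lemma edges_Q3: "edges Q3 = E12"
proof (rule set_eqI)
  fix e :: "nat \<times> nat" obtain v i where e: "e = (v,i)" by force
  show "e \<in> edges Q3 \<longleftrightarrow> e \<in> E12"
    unfolding e
    apply (rule iffI)
     apply (simp add: Q3_def edges_Q3_1)
    apply (simp add: E12_def Q3_def)
    apply (elim disjE)
    apply simp_all
    done
qed

lemma ends_Q3: "ends Q3 (v,i) = (v, v + 2^i)" by (simp add: Q3_def)
lemma verts_Q3: "verts Q3 = {0..<8}" by (simp add: Q3_def)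

definition at :: "(nat \<times> nat) \<times> bool \<Rightarrow> nat" where "at h = half_end Q3 h"
definition oth :: "(nat \<times> nat) \<times> bool \<Rightarrow> (nat \<times> nat) \<times> bool" where "oth h = (fst h, \<not> snd h)"
definition HE :: "((nat \<times> nat) \<times> bool) set" where "HE = {h. fst h \<in> edges Q3}"

lemma at_simp: "at ((v,i),s) = (if s then v + 2^i else v)"
  by (simp add: at_def half_end_def ends_Q3)

lemma HE_iff: "h \<in> HE \<longleftrightarrow> fst h \<in> E12" by (simp add: HE_def edges_Q3)

lemma oth_oth[simp]: "oth (oth h) = h" by (simp add: oth_def)
lemma oth_HE: "oth h \<in> HE \<longleftrightarrow> h \<in> HE" by (simp add: oth_def HE_def)
lemma oth_neq: "oth h \<noteq> h" by (cases h) (simp add: oth_def)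

lemma allHE: "(\<forall>h\<in>HE. P h) \<longleftrightarrow> (\<forall>e\<in>E12. P (e,False) \<and> P (e,True))"
  by (auto simp: HE_iff) (metis (full_types) prod.collapse)

lemma C1: "h \<in> HE \<Longrightarrow> at h \<noteq> at (oth h)"
proof -
  have "\<forall>h\<in>HE. at h \<noteq> at (oth h)" unfolding allHE by (simp add: E12_def oth_def at_simp)
  then show "h \<in> HE \<Longrightarrow> ?thesis" by blast
qed

lemma C4: "h \<in> HE \<Longrightarrow> at h < 8"
proof -
  have "\<forall>h\<in>HE. at h < 8" unfolding allHE by (simp add: E12_def oth_def at_simp)
  then show "h \<in> HE \<Longrightarrow> ?thesis" by blast
qed

lemma C2: "h \<in> HE \<Longrightarrow> h' \<in> HE \<Longrightarrow> at h = at h' \<Longrightarrow> at (oth h) = at (oth h') \<Longrightarrow> h = h'"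
proof -
  have "\<forall>h\<in>HE. \<forall>h'\<in>HE. at h = at h' \<longrightarrow> at (oth h) = at (oth h') \<longrightarrow> h = h'"
    unfolding allHE by (simp add: E12_def oth_def at_simp)
  then show "h \<in> HE \<Longrightarrow> h' \<in> HE \<Longrightarrow> at h = at h' \<Longrightarrow> at (oth h) = at (oth h') \<Longrightarrow> h = h'" by blast
qed


lemma exHE: "(\<exists>h\<in>HE. P h) \<longleftrightarrow> (\<exists>e\<in>E12. P (e,False) \<or> P (e,True))"
  by (auto simp: HE_iff) (metis (full_types) prod.collapse)

definition adjQ :: "nat \<Rightarrow> nat \<Rightarrow> bool" where
  "adjQ a b \<longleftrightarrow> (\<exists>h\<in>HE. at h = a \<and> at (oth h) = b)"

definition S24 :: "(nat \<times> nat) set" where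
 "S24 = {(0,1),(1,0),(2,3),(3,2),(4,5),(5,4),(6,7),(7,6),(0,2),(2,0),(1,3),(3,1),(4,6),(6,4),(5,7),(7,5),(0,4),(4,0),(1,5),(5,1),(2,6),(6,2),(3,7),(7,3)}"

lemma adjQ_S: "adjQ a b \<longleftrightarrow> (a,b) \<in> S24"
proof -
  have "adjQ a b \<longleftrightarrow> (\<exists>e\<in>E12. (a,b) = (at (e,False), at (oth (e,False))) \<or> (a,b) = (at (e,True), at (oth (e,True))))"
    unfolding adjQ_def exHE by blast
  also have "\<dots> \<longleftrightarrow> (a,b) \<in> S24"
    unfolding E12_def S24_def bex_simps insert_iff oth_def by (simp add: at_simp numeral_eq_Suc del: prod.inject)
  finally show ?thesis .
qed


definition nb :: "nat \<Rightarrow> nat \<Rightarrow> nat" where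
  "nb v k = (if bit v k then v - 2^k else v + 2^k)"

lemma adjQ_nb: "adjQ a b \<longleftrightarrow> a < 8 \<and> (b = nb a 0 \<or> b = nb a 1 \<or> b = nb a 2)"
proof (cases "a < 8")
  case True
  then show ?thesis unfolding adjQ_S S24_def
    apply -
    apply (drule lt8)
    apply (elim disjE)
    apply (simp_all add: nb_def bit_iff_odd numeral_2_eq_2[symmetric] numeral_3_eq_3[symmetric])
    done
next
  case False
  then show ?thesis unfolding adjQ_S S24_def by auto
qed

lemma FL1: "vi < 8 \<Longrightarrow> vj < 8 \<Longrightarrow> vi \<noteq> vj \<Longrightarrow> (vi \<in> {0,3,5,6} \<longleftrightarrow> vj \<in> {0,3,5,6}) \<Longrightarrow>
  k1 < 3 \<Longrightarrow> k2 < 3 \<Longrightarrow> k1 \<noteq> k2 \<Longrightarrow> adjQ vi (nb vj k1) \<or> adjQ vi (nb vj k2)"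
  unfolding adjQ_nb
  apply (drule lt8, drule lt8, drule lt3, drule lt3)
  apply (elim disjE)
  apply (simp_all add: nb_def bit_iff_odd numeral_2_eq_2[symmetric] numeral_3_eq_3[symmetric])
  done

lemma FL0: "vi < 8 \<Longrightarrow> vj < 8 \<Longrightarrow> vi \<noteq> vj \<Longrightarrow> \<not> (vi \<in> {0,3,5,6} \<longleftrightarrow> vj \<in> {0,3,5,6}) \<Longrightarrow>
  \<not> adjQ vi vj \<Longrightarrow> vj = 7 - vi"
  unfolding adjQ_nb
  apply (drule lt8, drule lt8)
  apply (elim disjE)
  apply (simp_all add: nb_def bit_iff_odd numeral_2_eq_2[symmetric] numeral_3_eq_3[symmetric])
  done

lemma FL2: "vi < 8 \<Longrightarrow> k < 3 \<Longrightarrow> nb vi ((k+1) mod 3) \<noteq> nb vi ((k+2) mod 3) \<and>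
   adjQ vi (nb vi ((k+1) mod 3)) \<and> adjQ vi (nb vi ((k+2) mod 3)) \<and>
   adjQ (nb vi ((k+1) mod 3)) (nb (7 - vi) k) \<and> adjQ (nb vi ((k+2) mod 3)) (nb (7 - vi) k)"
  unfolding adjQ_nb
  apply (drule lt8, drule lt3)
  apply (elim disjE)
  apply (simp_all add: nb_def bit_iff_odd numeral_2_eq_2[symmetric] numeral_3_eq_3[symmetric])
  done

definition adjE :: "nat \<times> nat \<Rightarrow> nat \<Rightarrow> nat \<Rightarrow> bool" where
  "adjE e x y \<longleftrightarrow> ends Q3 e = (x,y) \<or> ends Q3 e = (y,x)"

lemma allE12: "(\<forall>e\<in>edges Q3. P e) \<longleftrightarrow> (\<forall>e\<in>E12. P e)" by (simp add: edges_Q3)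

lemma Q3_noloop: "e \<in> edges Q3 \<Longrightarrow> fst (ends Q3 e) \<noteq> snd (ends Q3 e)"
proof -
  have "\<forall>e\<in>edges Q3. fst (ends Q3 e) \<noteq> snd (ends Q3 e)" unfolding allE12 by (simp add: E12_def ends_Q3)
  then show "e \<in> edges Q3 \<Longrightarrow> ?thesis" by blast
qed

lemma adjE_adjQ: "e \<in> edges Q3 \<Longrightarrow> adjE e x y \<Longrightarrow> adjQ x y"
proof -
  assume e: "e \<in> edges Q3" and a: "adjE e x y"
  have h1: "(e,False) \<in> HE" "(e,True) \<in> HE" using e by (auto simp: HE_def)
  have "at (e,False) = fst (ends Q3 e)" "at (e,True) = snd (ends Q3 e)"
    by (auto simp: at_def half_end_def)
  moreover have "oth (e,False) = (e,True)" "oth (e,True) = (e,False)" by (auto simp: oth_def)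
  ultimately show ?thesis using a h1 unfolding adjE_def adjQ_def
    by (metis fst_conv snd_conv)
qed

lemma Q3_nomulti: "e \<in> edges Q3 \<Longrightarrow> e' \<in> edges Q3 \<Longrightarrow> adjE e x y \<Longrightarrow> adjE e' x y \<Longrightarrow> e = e'"
proof -
  have "\<forall>e\<in>edges Q3. \<forall>e'\<in>edges Q3. ends Q3 e = ends Q3 e' \<or> ends Q3 e = prod.swap (ends Q3 e') \<longrightarrow> e = e'"
    unfolding allE12 by (simp add: E12_def ends_Q3) 
  then show "e \<in> edges Q3 \<Longrightarrow> e' \<in> edges Q3 \<Longrightarrow> adjE e x y \<Longrightarrow> adjE e' x y \<Longrightarrow> e = e'"
    unfolding adjE_def by fastforce
qed

lemma adjQ_par: "adjQ x y \<Longrightarrow> (x \<in> {0,3,5,6} \<longleftrightarrow> y \<notin> {0,3,5,6})"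
  unfolding adjQ_S S24_def by (simp only: insert_iff empty_iff prod.inject) (elim disjE; simp)

lemma Q3_notri: assumes "adjQ x y" "adjQ y z" "adjQ z x" shows False
  using adjQ_par[OF assms(1)] adjQ_par[OF assms(2)] adjQ_par[OF assms(3)] by argo

definition hq :: "nat \<Rightarrow> nat \<Rightarrow> (nat \<times> nat) \<times> bool" where
  "hq v i = (if bit v i then ((v - 2^i, i), True) else ((v, i), False))"

lemma hq_in: "v < 8 \<Longrightarrow> i < 3 \<Longrightarrow> hq v i \<in> HE \<and> at (hq v i) = v"
  apply (drule lt8, drule lt3)
  apply (elim disjE)
  apply (simp_all add: hq_def HE_iff E12_def at_simp bit_iff_odd numeral_2_eq_2[symmetric] numeral_3_eq_3[symmetric])
  done

lemma hq_all: "h \<in> HE \<Longrightarrow> h = hq (at h) 0 \<or> h = hq (at h) 1 \<or> h = hq (at h) 2"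
proof -
  have "\<forall>h\<in>HE. h = hq (at h) 0 \<or> h = hq (at h) 1 \<or> h = hq (at h) 2"
    unfolding allHE by (simp add: E12_def at_simp hq_def bit_iff_odd)
  then show "h \<in> HE \<Longrightarrow> ?thesis" by blast
qed

lemma hq_inj: "hq v i = hq v j \<Longrightarrow> i = j"
  by (simp add: hq_def split: if_splits)

lemma he_at_Q3: "v < 8 \<Longrightarrow> half_edges_at Q3 v = {hq v 0, hq v 1, hq v 2}"
  unfolding half_edges_at_def
  using hq_in[of v] hq_all by (auto simp: HE_def at_def)



definition sw :: "(nat \<times> nat) \<times> bool \<Rightarrow> (nat \<times> nat) \<times> bool \<Rightarrow> (nat \<times> nat) \<times> bool \<Rightarrow> (nat \<times> nat) \<times> bool" where
  "sw a b h = (if h = a then b else if h = b then a else h)"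

definition dec :: "nat \<Rightarrow> nat \<times> nat" where "dec n = (n div 3, n mod 3)"
definition enc :: "nat \<times> nat \<Rightarrow> nat" where "enc e = 3 * fst e + snd e"

definition Kg :: "(nat \<times> nat) \<times> bool \<Rightarrow> (nat \<times> nat) \<times> bool \<Rightarrow> (nat, nat) mgraph" where
  "Kg a b = \<lparr> verts = {0..<8}, edges = enc ` edges Q3,
     ends = (\<lambda>n. (at (sw a b (dec n, False)), at (sw a b (dec n, True)))) \<rparr>"

lemma sw_sw[simp]: "sw a b (sw a b h) = h" by (simp add: sw_def)
lemma sw_inj: "sw a b h = sw a b h' \<Longrightarrow> h = h'" by (metis sw_sw)
lemma sw_HE: "a \<in> HE \<Longrightarrow> b \<in> HE \<Longrightarrow> sw a b h \<in> HE \<longleftrightarrow> h \<in> HE"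
  by (simp add: sw_def)

lemma E_snd: "e \<in> edges Q3 \<Longrightarrow> snd e < 3"
  by (auto simp: edges_Q3 E12_def)

lemma dec_enc: "e \<in> edges Q3 \<Longrightarrow> dec (enc e) = e"
  using E_snd[of e] by (cases e) (simp add: dec_def enc_def)

lemma half_end_K: "half_end (Kg a b) (n, s) = at (sw a b (dec n, s))"
  by (simp add: half_end_def Kg_def)

lemma half_end_K': "half_end (Kg a b) h = at (sw a b (dec (fst h), snd h))"
  by (cases h) (simp add: half_end_K)

lemma edges_K: "edges (Kg a b) = enc ` edges Q3" by (simp add: Kg_def)
lemma verts_K: "verts (Kg a b) = {0..<8}" by (simp add: Kg_def)
lemma ends_K: "ends (Kg a b) n = (at (sw a b (dec n, False)), at (sw a b (dec n, True)))" by (simp add: Kg_def)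

lemma tile_K:
  assumes a: "a \<in> HE" and b: "b \<in> HE" and lab: "lam a = lam b"
  shows "tile_at (Kg a b) (\<lambda>h. lam (dec (fst h), snd h)) v = tile_at Q3 lam v"
proof -
  let ?phi = "\<lambda>h::nat \<times> bool. sw a b (dec (fst h), snd h)"
  let ?SK = "half_edges_at (Kg a b) v"
  have lsw: "lam (sw a b h) = lam h" for h using lab by (simp add: sw_def)
  have SK: "?SK = {h. fst h \<in> enc ` edges Q3 \<and> at (sw a b (dec (fst h), snd h)) = v}"
    by (simp add: half_edges_at_def half_end_K' edges_K)
  have img: "?phi ` ?SK = half_edges_at Q3 v"
  proof
    show "?phi ` ?SK \<subseteq> half_edges_at Q3 v"
    proof
      fix x assume "x \<in> ?phi ` ?SK"
      then obtain n s where ns: "(n,s) \<in> ?SK" "x = sw a b (dec n, s)" by auto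
      then obtain e where e: "e \<in> edges Q3" "n = enc e" and at: "at x = v" using SK by auto
      have "(dec n, s) \<in> HE" using e dec_enc by (simp add: HE_def)
      then have "x \<in> HE" using ns sw_HE[OF a b] by simp
      then show "x \<in> half_edges_at Q3 v" using at by (simp add: half_edges_at_def HE_def at_def)
    qed
  next
    show "half_edges_at Q3 v \<subseteq> ?phi ` ?SK"
    proof
      fix x assume x: "x \<in> half_edges_at Q3 v"
      then have xHE: "x \<in> HE" and atx: "at x = v" by (auto simp: half_edges_at_def HE_def at_def)
      obtain e s where es: "sw a b x = (e, s)" by (metis prod.collapse)
      have "sw a b x \<in> HE" using xHE sw_HE[OF a b] by simp
      then have e: "e \<in> edges Q3" using es by (simp add: HE_def)
      have ph: "?phi (enc e, s) = x" using dec_enc[OF e] es by (metis fst_conv snd_conv sw_sw)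
      have inS: "(enc e, s) \<in> ?SK" unfolding SK using e ph atx by simp
      show "x \<in> ?phi ` ?SK" by (rule image_eqI[where f="?phi", OF ph[symmetric] inS])
    qed
  qed
  have inj: "inj_on ?phi ?SK"
  proof (rule inj_onI)
    fix x y assume x: "x \<in> ?SK" and y: "y \<in> ?SK" and eq: "?phi x = ?phi y"
    obtain n s where xn: "x = (n,s)" by (metis prod.collapse)
    obtain m r where ym: "y = (m,r)" by (metis prod.collapse)
    have "(dec n, s) = (dec m, r)" using eq xn ym sw_inj[of a b "(dec n, s)" "(dec m, r)"] by simp
    moreover obtain e where "e \<in> edges Q3" "n = enc e" using x xn SK by auto
    moreover obtain e' where "e' \<in> edges Q3" "m = enc e'" using y ym SK by auto
    ultimately show "x = y" using xn ym dec_enc by auto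
  qed
  have "tile_at (Kg a b) (\<lambda>h. lam (dec (fst h), snd h)) v = image_mset (\<lambda>h. lam (?phi h)) (mset_set ?SK)"
    unfolding tile_at_def using lsw by simp
  also have "\<dots> = image_mset lam (image_mset ?phi (mset_set ?SK))"
    by (simp add: multiset.map_comp comp_def)
  also have "\<dots> = image_mset lam (mset_set (?phi ` ?SK))"
    using inj by (simp add: image_mset_mset_set)
  also have "\<dots> = tile_at Q3 lam v" using img by (simp add: tile_at_def)
  finally show ?thesis .
qed

lemma swap_iso:
  assumes S3: "realizes_scenario3 P Q3" and ad: "assembly_design Q3 lam" and pot: "pot_of Q3 lam \<subseteq> P"
    and a: "a \<in> HE" and b: "b \<in> HE" and lab: "lam a = lam b"
  shows "mgraph_iso (Kg a b) Q3"
proof -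
  let ?lamK = "\<lambda>h. lam (dec (fst h), snd h)"
  have adK: "assembly_design (Kg a b) ?lamK"
    unfolding assembly_design_def edges_K
  proof
    fix n assume "n \<in> enc ` edges Q3"
    then obtain e where e: "e \<in> edges Q3" "n = enc e" by auto
    then show "?lamK (n, True) = hat (?lamK (n, False))" using ad dec_enc[OF e(1)]
      by (simp add: assembly_design_def)
  qed
  have potK: "pot_of (Kg a b) ?lamK = pot_of Q3 lam"
    unfolding pot_of_def verts_K verts_Q3 using tile_K[OF a b lab] by simp
  have realK: "realizes P (Kg a b)" unfolding realizes_def using adK potK pot by metis
  have fin: "finite (edges Q3)" by (simp add: edges_Q3 E12_def)
  have endsok: "\<forall>n\<in>edges (Kg a b). fst (ends (Kg a b) n) \<in> verts (Kg a b) \<and> snd (ends (Kg a b) n) \<in> verts (Kg a b)"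
  proof
    fix n assume "n \<in> edges (Kg a b)"
    then obtain e where e: "e \<in> edges Q3" "n = enc e" by (auto simp: edges_K)
    have "(e, s) \<in> HE" for s using e by (simp add: HE_def)
    then have "sw a b (e, s) \<in> HE" for s using sw_HE[OF a b] by blast
    then have "at (sw a b (e, s)) < 8" for s using C4 by blast
    then show "fst (ends (Kg a b) n) \<in> verts (Kg a b) \<and> snd (ends (Kg a b) n) \<in> verts (Kg a b)"
      using dec_enc[OF e(1)] e(2) by (simp add: ends_K verts_K)
  qed
  have gK: "is_graph (Kg a b)" unfolding is_graph_def using fin endsok by (simp add: verts_K edges_K)
  have "card (verts (Kg a b)) = card (verts Q3)" by (simp add: verts_K verts_Q3)
  then show ?thesis using S3 gK realK unfolding realizes_scenario3_def by blast
qed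

definition adjK :: "(nat \<times> nat) \<times> bool \<Rightarrow> (nat \<times> nat) \<times> bool \<Rightarrow> nat \<Rightarrow> nat \<Rightarrow> bool" where
  "adjK a b x y \<longleftrightarrow> (\<exists>h\<in>HE. at (sw a b h) = x \<and> at (sw a b (oth h)) = y)"

lemma swap_inv:
  assumes iso: "mgraph_iso (Kg a b) Q3"
  shows "(\<forall>h\<in>HE. at (sw a b h) \<noteq> at (sw a b (oth h))) \<and>
    (\<forall>h\<in>HE. \<forall>h'\<in>HE. fst h \<noteq> fst h' \<longrightarrow> at (sw a b h) = at (sw a b h') \<longrightarrow> at (sw a b (oth h)) \<noteq> at (sw a b (oth h'))) \<and>
    (\<forall>x y z. adjK a b x y \<longrightarrow> adjK a b y z \<longrightarrow> adjK a b z x \<longrightarrow> False)"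
proof -
  obtain f g where g: "bij_betw g (edges (Kg a b)) (edges Q3)" and
    en: "\<forall>e\<in>edges (Kg a b). ends Q3 (g e) = (f (fst (ends (Kg a b) e)), f (snd (ends (Kg a b) e))) \<or>
                  ends Q3 (g e) = (f (snd (ends (Kg a b) e)), f (fst (ends (Kg a b) e)))"
    using iso unfolding mgraph_iso_def by blast
  have key: "g (enc (fst h)) \<in> edges Q3 \<and> adjE (g (enc (fst h))) (f (at (sw a b h))) (f (at (sw a b (oth h))))"
    if h: "h \<in> HE" for h
  proof -
    have eQ: "fst h \<in> edges Q3" using h by (simp add: HE_def)
    have nK: "enc (fst h) \<in> edges (Kg a b)" using eQ by (simp add: edges_K)
    have "ends (Kg a b) (enc (fst h)) = (at (sw a b (fst h, False)), at (sw a b (fst h, True)))"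
      using dec_enc[OF eQ] by (simp add: ends_K)
    then have EN: "ends Q3 (g (enc (fst h))) = (f (at (sw a b (fst h, False))), f (at (sw a b (fst h, True)))) \<or>
       ends Q3 (g (enc (fst h))) = (f (at (sw a b (fst h, True))), f (at (sw a b (fst h, False))))"
      using en nK by auto
    obtain e s where hs: "h = (e, s)" by (metis prod.collapse)
    have "adjE (g (enc (fst h))) (f (at (sw a b h))) (f (at (sw a b (oth h))))"
      using EN unfolding adjE_def oth_def hs by (cases s) auto
    then show ?thesis using nK g bij_betwE by blast
  qed
  have ginj: "inj_on g (edges (Kg a b))" using g bij_betw_def by blast
  have encinj: "fst h \<noteq> fst h' \<Longrightarrow> h \<in> HE \<Longrightarrow> h' \<in> HE \<Longrightarrow> g (enc (fst h)) \<noteq> g (enc (fst h'))" for h h'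
  proof
    assume ne: "fst h \<noteq> fst h'" and h: "h \<in> HE" and h': "h' \<in> HE" and eq: "g (enc (fst h)) = g (enc (fst h'))"
    have "enc (fst h) \<in> edges (Kg a b)" "enc (fst h') \<in> edges (Kg a b)" using h h' by (auto simp: HE_def edges_K)
    then have "enc (fst h) = enc (fst h')" using ginj eq inj_onD by metis
    then show False using dec_enc h h' ne by (metis HE_def mem_Collect_eq)
  qed
  have i1: "\<forall>h\<in>HE. at (sw a b h) \<noteq> at (sw a b (oth h))"
  proof (intro ballI notI)
    fix h assume h: "h \<in> HE" and eq: "at (sw a b h) = at (sw a b (oth h))"
    then show False using key[OF h] Q3_noloop unfolding adjE_def by (metis fst_conv snd_conv)
  qed
  have i2: "\<forall>h\<in>HE. \<forall>h'\<in>HE. fst h \<noteq> fst h' \<longrightarrow> at (sw a b h) = at (sw a b h') \<longrightarrow> at (sw a b (oth h)) \<noteq> at (sw a b (oth h'))"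
  proof (intro ballI impI notI)
    fix h h' assume h: "h \<in> HE" and h': "h' \<in> HE" and ne: "fst h \<noteq> fst h'" and
      e1: "at (sw a b h) = at (sw a b h')" and e2: "at (sw a b (oth h)) = at (sw a b (oth h'))"
    have "g (enc (fst h)) = g (enc (fst h'))"
      using key[OF h] key[OF h'] e1 e2 Q3_nomulti by metis
    then show False using encinj ne h h' by blast
  qed
  have i3: "adjQ (f x) (f y)" if "adjK a b x y" for x y
    using that key adjE_adjQ unfolding adjK_def by blast
  show ?thesis using i1 i2 i3 Q3_notri by blast
qed



lemma sw_id: "h \<noteq> a \<Longrightarrow> h \<noteq> b \<Longrightarrow> sw a b h = h" by (simp add: sw_def)
lemma sw_a: "sw a b a = b" by (simp add: sw_def)
lemma sw_b: "sw a b b = a" by (simp add: sw_def)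

lemma hat_hat[simp]: "hat (hat x) = x" by (simp add: hat_def)
lemma hat_neq: "hat x \<noteq> x" by (cases x) (simp add: hat_def)

lemma lam_oth: "assembly_design Q3 lam \<Longrightarrow> h \<in> HE \<Longrightarrow> lam (oth h) = hat (lam h)"
  by (cases h, case_tac b) (auto simp: assembly_design_def HE_def oth_def)

lemma adjQ_irrefl: "adjQ x y \<Longrightarrow> x \<noteq> y" unfolding adjQ_def by (metis C1)

lemma adjQ_sym: "adjQ a b \<Longrightarrow> adjQ b a"
  unfolding adjQ_def by (metis oth_HE oth_oth)

lemma same_edge: "fst h = fst h' \<Longrightarrow> h = h' \<or> h = oth h'"
  by (cases h, cases h') (auto simp: oth_def)

lemma at_oth_ne: "h \<in> HE \<Longrightarrow> at h \<noteq> at (oth h)" using C1 by blast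

lemma LOOP:
  assumes SWI: "\<And>a b. a \<in> HE \<Longrightarrow> b \<in> HE \<Longrightarrow> lam a = lam b \<Longrightarrow> mgraph_iso (Kg a b) Q3"
    and ad: "assembly_design Q3 lam"
    and ha: "ha \<in> HE" and hb: "hb \<in> HE" and at: "at ha = at hb" and lab: "lam hb = hat (lam ha)"
  shows False
proof -
  have l: "lam ha = lam (oth hb)" using lam_oth[OF ad hb] lab by simp
  have ob: "oth hb \<in> HE" using hb oth_HE by blast
  note inv = swap_inv[OF SWI[OF ha ob l]]
  have "at (sw ha (oth hb) hb) \<noteq> at (sw ha (oth hb) (oth hb))" using inv hb by blast
  moreover have "hb \<noteq> ha" using lab hat_neq by metis
  moreover have "hb \<noteq> oth hb" using oth_neq by metis
  ultimately have "at hb \<noteq> at ha" using sw_id sw_b by metis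
  then show False using at by simp
qed

lemma MULTI:
  assumes SWI: "\<And>a b. a \<in> HE \<Longrightarrow> b \<in> HE \<Longrightarrow> lam a = lam b \<Longrightarrow> mgraph_iso (Kg a b) Q3"
    and p: "p \<in> HE" and q: "q \<in> HE" and lab: "lam p = lam q" and atp: "at p = vi" and atq: "at q = vj"
    and adw: "adjQ vi (at (oth q))" and ne: "at (oth p) \<noteq> at (oth q)" and vne: "vi \<noteq> vj"
    and nadj: "\<not> adjQ vi vj"
  shows False
proof -
  define w where "w = at (oth q)"
  obtain h where h: "h \<in> HE" "at h = vi" "at (oth h) = w" using adw unfolding adjQ_def w_def by blast
  note inv = swap_inv[OF SWI[OF p q lab]]
  have wvi: "w \<noteq> vi" using adjQ_irrefl adw w_def by metis
  have adjw: "adjQ vj w" unfolding w_def adjQ_def using q atq by blast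
  have wvj: "w \<noteq> vj" using adjQ_irrefl adjw by metis
  have s1: "sw p q q = p" by (rule sw_b)
  have s2: "sw p q (oth q) = oth q"
    by (rule sw_id) (metis atp w_def wvi, metis oth_neq)
  have s3: "sw p q h = h"
    by (rule sw_id) (metis h(3) ne w_def, metis h(2) atq vne)
  have s4: "sw p q (oth h) = oth h"
    by (rule sw_id) (metis atp h(3) wvi, metis atq h(3) wvj)
  have fne: "fst h \<noteq> fst q"
  proof
    assume "fst h = fst q"
    then have "h = q \<or> h = oth q" by (rule same_edge)
    then show False using h atq vne w_def wvi by metis
  qed
  have "at (sw p q q) = at (sw p q h)" using s1 s3 atp h by simp
  moreover have "at (sw p q (oth q)) = at (sw p q (oth h))" using s2 s4 h w_def by simp
  ultimately show False using inv q h(1) fne by metis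
qed

lemma TRI:
  assumes SWI: "\<And>a b. a \<in> HE \<Longrightarrow> b \<in> HE \<Longrightarrow> lam a = lam b \<Longrightarrow> mgraph_iso (Kg a b) Q3"
    and p: "p \<in> HE" and q: "q \<in> HE" and lab: "lam p = lam q" and atp: "at p = vi" and atq: "at q = vj"
    and am: "adjQ vi m" and amw: "adjQ m (at (oth q))" and ne: "m \<noteq> at (oth p)" and vne: "vi \<noteq> vj"
    and nadj: "\<not> adjQ vi vj"
  shows False
proof -
  define w where "w = at (oth q)"
  note inv = swap_inv[OF SWI[OF p q lab]]
  have adjw: "adjQ vj w" unfolding w_def adjQ_def using q atq by blast
  have wvj: "w \<noteq> vj" using adjQ_irrefl adjw by metis
  have wvi: "w \<noteq> vi" using adjw nadj adjQ_sym by metis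
  have mvi: "m \<noteq> vi" using adjQ_irrefl am by metis
  have mvj: "m \<noteq> vj" using am nadj by metis
  have k1: "adjK p q vi w"
  proof -
    have "sw p q q = p" by (rule sw_b)
    moreover have "sw p q (oth q) = oth q"
      by (rule sw_id) (metis atp w_def wvi, metis oth_neq)
    ultimately show ?thesis unfolding adjK_def using q atp w_def by metis
  qed
  have k2: "adjK p q w m"
  proof -
    obtain h where h: "h \<in> HE" "at h = w" "at (oth h) = m"
      using adjQ_sym[OF amw] unfolding adjQ_def w_def by blast
    have "sw p q h = h" by (rule sw_id) (metis atp h(2) wvi, metis atq h(2) wvj)
    moreover have "sw p q (oth h) = oth h" by (rule sw_id) (metis atp h(3) mvi, metis atq h(3) mvj)
    ultimately show ?thesis unfolding adjK_def using h by metis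
  qed
  have k3: "adjK p q m vi"
  proof -
    obtain h where h: "h \<in> HE" "at h = m" "at (oth h) = vi"
      using adjQ_sym[OF am] unfolding adjQ_def by blast
    have "sw p q h = h" by (rule sw_id) (metis atp h(2) mvi, metis atq h(2) mvj)
    moreover have "sw p q (oth h) = oth h" by (rule sw_id) (metis h(2) ne oth_oth, metis atq h(3) vne)
    ultimately show ?thesis unfolding adjK_def using h by metis
  qed
  show False using inv k1 k2 k3 by blast
qed



lemma tile_hq: "v < 8 \<Longrightarrow> tile_at Q3 lam v = {#lam (hq v 0), lam (hq v 1), lam (hq v 2)#}"
proof -
  assume v: "v < 8"
  have d: "hq v 0 \<noteq> hq v 1" "hq v 0 \<noteq> hq v 2" "hq v 1 \<noteq> hq v 2" using hq_inj by force+
  show ?thesis unfolding tile_at_def he_at_Q3[OF v] using d by simp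
qed

lemma count3: "2 \<le> count {#a0, a1, a2#} x \<Longrightarrow> (a0 = x \<and> a1 = x) \<or> (a0 = x \<and> a2 = x) \<or> (a1 = x \<and> a2 = x)"
  by (auto split: if_splits)

lemma count3': "k < 3 \<Longrightarrow> l < 3 \<Longrightarrow> k \<noteq> l \<Longrightarrow> f k = x \<Longrightarrow> f l = x \<Longrightarrow> 2 \<le> count {#f 0, f 1, f (2::nat)#} x"
  apply (drule lt3, drule lt3)
  apply (elim disjE)
  apply auto
  done

lemma ex3: assumes "P 0 \<or> P 1 \<or> P 2" shows "\<exists>k<3. P (k::nat)"
proof -
  have "(0::nat) < 3" "(1::nat) < 3" "(2::nat) < 3" by simp_all
  then show ?thesis using assms by blast
qed

lemma pair3: "(f 0 = x \<and> f 1 = x) \<or> (f 0 = x \<and> f 2 = x) \<or> (f 1 = x \<and> f 2 = x) \<Longrightarrow>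
   \<exists>k l. k < 3 \<and> l < 3 \<and> k \<noteq> l \<and> f k = x \<and> f (l::nat) = x"
  apply (elim disjE)
    apply (rule exI[of _ 0], rule exI[of _ 1]; simp)
   apply (rule exI[of _ 0], rule exI[of _ 2]; simp)
  apply (rule exI[of _ 1], rule exI[of _ 2]; simp)
  done

lemma fst_eq_cases: "fst x = fst (y::'b \<times> bool) \<Longrightarrow> y = x \<or> y = hat x"
  by (cases x, cases y) (auto simp: hat_def)

lemma FL1': "vi < 8 \<Longrightarrow> vj < 8 \<Longrightarrow> vi \<noteq> vj \<Longrightarrow> (vi \<in> {0,3,5,6} \<longleftrightarrow> vj \<in> {0,3,5,6}) \<Longrightarrow>
  adjQ vj w1 \<Longrightarrow> adjQ vj w2 \<Longrightarrow> w1 \<noteq> w2 \<Longrightarrow> adjQ vi w1 \<or> adjQ vi w2"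
proof -
  assume a: "vi < 8" "vj < 8" "vi \<noteq> vj" "(vi \<in> {0,3,5,6} \<longleftrightarrow> vj \<in> {0,3,5,6})"
    and w: "adjQ vj w1" "adjQ vj w2" "w1 \<noteq> w2"
  obtain k1 where k1: "k1 < 3" "w1 = nb vj k1" using w(1) ex3[of "\<lambda>k. w1 = nb vj k"] unfolding adjQ_nb by blast
  obtain k2 where k2: "k2 < 3" "w2 = nb vj k2" using w(2) ex3[of "\<lambda>k. w2 = nb vj k"] unfolding adjQ_nb by blast
  have "k1 \<noteq> k2" using k1 k2 w(3) by blast
  then show ?thesis using FL1[OF a k1(1) k2(1)] k1 k2 by simp
qed

theorem lemma4:
  fixes P :: "'a tile set"
    and lam :: "(nat \<times> nat) \<times> bool \<Rightarrow> 'a cend"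
    and t :: "'a tile"
    and vi vj :: nat
  assumes "is_pot P"
    and "realizes_scenario3 P Q3"
    and "assembly_design Q3 lam"
    and "pot_of Q3 lam \<subseteq> P"
    and "t \<in> P"
    and "vi \<in> verts Q3" and "vj \<in> verts Q3" and "vi \<noteq> vj"
    and "tile_at Q3 lam vi = t" and "tile_at Q3 lam vj = t"
  shows "\<exists>a b c. t = {#a, b, c#} \<and> bond_type a \<noteq> bond_type b \<and>
           bond_type a \<noteq> bond_type c \<and> bond_type b \<noteq> bond_type c"
proof -
  have SWI: "\<And>a b. a \<in> HE \<Longrightarrow> b \<in> HE \<Longrightarrow> lam a = lam b \<Longrightarrow> mgraph_iso (Kg a b) Q3"
    using swap_iso assms(2,3,4) by blast
  have ad: "assembly_design Q3 lam" by (rule assms(3))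
  have vi8: "vi < 8" and vj8: "vj < 8" using assms(6,7) by (auto simp: verts_Q3)
  have tvi: "t = {#lam (hq vi 0), lam (hq vi 1), lam (hq vi 2)#}" using tile_hq[of vi lam] vi8 assms(9) by simp
  have tvj: "t = {#lam (hq vj 0), lam (hq vj 1), lam (hq vj 2)#}" using tile_hq[of vj lam] vj8 assms(10) by simp
  have nadj: "\<not> adjQ vi vj"
  proof
    assume "adjQ vi vj"
    then obtain h where h: "h \<in> HE" "at h = vi" "at (oth h) = vj" unfolding adjQ_def by blast
    have oh: "oth h \<in> HE" using h(1) oth_HE by blast
    have "lam (oth h) \<in># t" using hq_all[OF oh] h(3) tvj by auto
    then have "lam (hq vi 0) = lam (oth h) \<or> lam (hq vi 1) = lam (oth h) \<or> lam (hq vi 2) = lam (oth h)"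
      using tvi by auto
    then obtain k where k: "k < 3" "lam (hq vi k) = lam (oth h)" using ex3[of "\<lambda>k. lam (hq vi k) = lam (oth h)"] by blast
    have hk: "hq vi k \<in> HE" "at (hq vi k) = vi" using hq_in[OF vi8 k(1)] by auto
    have e1: "at h = at (hq vi k)" using h(2) hk(2) by simp
    have e2: "lam (hq vi k) = hat (lam h)" using k(2) lam_oth[OF ad h(1)] by simp
    show False by (rule LOOP[OF SWI ad h(1) hk(1) e1 e2])
  qed
  have PAIR: "fst (lam (hq vi k)) \<noteq> fst (lam (hq vi l))" if kl: "k < 3" "l < 3" "k \<noteq> l" for k l
  proof
    assume eq: "fst (lam (hq vi k)) = fst (lam (hq vi l))"
    define x where "x = lam (hq vi k)"
    define p1 where "p1 = hq vi k"
    define p2 where "p2 = hq vi l"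
    have p1: "p1 \<in> HE" "at p1 = vi" using hq_in[OF vi8 kl(1)] p1_def by auto
    have p2: "p2 \<in> HE" "at p2 = vi" using hq_in[OF vi8 kl(2)] p2_def by auto
    have p12: "p1 \<noteq> p2" using hq_inj kl(3) p1_def p2_def by blast
    have "lam p2 = x \<or> lam p2 = hat x" using fst_eq_cases[OF eq] unfolding x_def p2_def .
    moreover have "lam p2 \<noteq> hat x"
    proof
      assume "lam p2 = hat x"
      moreover have "at p1 = at p2" using p1(2) p2(2) by simp
      ultimately show False using LOOP[OF SWI ad p1(1) p2(1)] x_def p1_def by blast
    qed
    ultimately have lp2: "lam p2 = x" by blast
    have "2 \<le> count t x" unfolding tvi using count3'[OF kl, of "\<lambda>i. lam (hq vi i)"] lp2 x_def p2_def by simp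
    then have "(lam (hq vj 0) = x \<and> lam (hq vj 1) = x) \<or> (lam (hq vj 0) = x \<and> lam (hq vj 2) = x) \<or>
       (lam (hq vj 1) = x \<and> lam (hq vj 2) = x)" using count3 tvj by metis
    then obtain k' l' where kl': "k' < 3" "l' < 3" "k' \<noteq> l'" "lam (hq vj k') = x" "lam (hq vj l') = x"
      using pair3[of "\<lambda>i. lam (hq vj i)" x] by blast
    define q1 where "q1 = hq vj k'"
    define q2 where "q2 = hq vj l'"
    have q1: "q1 \<in> HE" "at q1 = vj" using hq_in[OF vj8 kl'(1)] q1_def by auto
    have q2: "q2 \<in> HE" "at q2 = vj" using hq_in[OF vj8 kl'(2)] q2_def by auto
    have q12: "q1 \<noteq> q2" using hq_inj kl'(3) q1_def q2_def by blast
    have u12: "at (oth p1) \<noteq> at (oth p2)" using C2[OF p1(1) p2(1)] p1(2) p2(2) p12 by metis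
    have w12: "at (oth q1) \<noteq> at (oth q2)" using C2[OF q1(1) q2(1)] q1(2) q2(2) q12 by metis
    have l1: "lam p1 = lam q1" "lam p1 = lam q2" "lam p2 = lam q1" "lam p2 = lam q2"
      using x_def p1_def lp2 kl' q1_def q2_def by auto
    have aw1: "adjQ vj (at (oth q1))" unfolding adjQ_def using q1 by blast
    have aw2: "adjQ vj (at (oth q2))" unfolding adjQ_def using q2 by blast
    show False
    proof (cases "vi \<in> {0,3,5,6} \<longleftrightarrow> vj \<in> {0,3,5,6}")
      case True
      have "adjQ vi (at (oth q1)) \<or> adjQ vi (at (oth q2))"
        using FL1'[OF vi8 vj8 assms(8) True aw1 aw2 w12] .
      then show False
      proof
        assume a: "adjQ vi (at (oth q1))"
        show False
        proof (cases "at (oth p1) = at (oth q1)")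
          case True
          then have "at (oth p2) \<noteq> at (oth q1)" using u12 by simp
          then show False using MULTI[OF SWI p2(1) q1(1) l1(3) p2(2) q1(2) a _ assms(8) nadj] by blast
        next
          case False
          then show False using MULTI[OF SWI p1(1) q1(1) l1(1) p1(2) q1(2) a _ assms(8) nadj] by blast
        qed
      next
        assume a: "adjQ vi (at (oth q2))"
        show False
        proof (cases "at (oth p1) = at (oth q2)")
          case True
          then have "at (oth p2) \<noteq> at (oth q2)" using u12 by simp
          then show False using MULTI[OF SWI p2(1) q2(1) l1(4) p2(2) q2(2) a _ assms(8) nadj] by blast
        next
          case False
          then show False using MULTI[OF SWI p1(1) q2(1) l1(2) p1(2) q2(2) a _ assms(8) nadj] by blast
        qed
      qed
    next
      case False
      have vj7: "vj = 7 - vi" using FL0[OF vi8 vj8 assms(8) False nadj] .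
      obtain kk where kk: "kk < 3" "at (oth q1) = nb vj kk" using aw1 ex3[of "\<lambda>k. at (oth q1) = nb vj k"] unfolding adjQ_nb by blast
      note F = FL2[OF vi8 kk(1)]
      define m1 where "m1 = nb vi ((kk+1) mod 3)"
      define m2 where "m2 = nb vi ((kk+2) mod 3)"
      have F': "m1 \<noteq> m2" "adjQ vi m1" "adjQ vi m2" "adjQ m1 (at (oth q1))" "adjQ m2 (at (oth q1))"
        using F kk(2) vj7 m1_def m2_def by auto
      show False
      proof (cases "m1 = at (oth p1)")
        case True
        then have "m2 \<noteq> at (oth p1)" using F'(1) by simp
        then show False using TRI[OF SWI p1(1) q1(1) l1(1) p1(2) q1(2) F'(3) F'(5) _ assms(8) nadj] by blast
      next
        case False
        then show False using TRI[OF SWI p1(1) q1(1) l1(1) p1(2) q1(2) F'(2) F'(4) _ assms(8) nadj] by blast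
      qed
    qed
  qed
  have "(0::nat) < 3" "(1::nat) < 3" "(2::nat) < 3" "(0::nat) \<noteq> 1" "(0::nat) \<noteq> 2" "(1::nat) \<noteq> 2" by simp_all
  then have "bond_type (lam (hq vi 0)) \<noteq> bond_type (lam (hq vi 1)) \<and> bond_type (lam (hq vi 0)) \<noteq> bond_type (lam (hq vi 2))
     \<and> bond_type (lam (hq vi 1)) \<noteq> bond_type (lam (hq vi 2))"
    using PAIR unfolding bond_type_def by blast
  then show ?thesis using tvi by blast
qed

end
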